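(* Let $G$ be a finite simple graph with $n$ vertices and minimum degree $\delta > 1$. Let $\widehat{\delta} = \lfloor 0.5\,\delta \rfloor$, let $\delta' = \delta$ if $\delta$ is odd and $\delta' = \delta+1$ if $\delta$ is even, and let $\widetilde{d}_{0.5} = \binom{\delta'+1}{\lceil 0.5\,\delta' \rceil}$. Then $$\gamma_s(G) \le \left(1 - \frac{2\widehat{\delta}}{(1+\widehat{\delta})^{1+1/\widehat{\delta}}\,\widetilde{d}_{0.5}^{\;1/\widehat{\delta}}}\right) n.$$
   Context: For a vertex $v$ of $G$, $N[v]$ denotes the closed neighbourhood of $v$ (i.e. $v$ together with its neighbours). A signed domination function of $G$ is a function $f: V(G) \to \{-1, 1\}$ such that $\sum_{x \in N[v]} f(x) \ge 1$ for every vertex $v \in V(G)$. The weight of $f$ is $f(V(G)) = \sum_{v \in V(G)} f(v)$. The signed domination number $\gamma_s(G)$ is the minimum weight of a signed domination function of $G$. *)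

theory Defs
  imports Complex_Main
begin

definition simple_graph :: "'a set \<Rightarrow> ('a \<Rightarrow> 'a \<Rightarrow> bool) \<Rightarrow> bool" where
  "simple_graph V E \<longleftrightarrow> finite V \<and> (\<forall>u v. E u v \<longrightarrow> E v u)
     \<and> (\<forall>v. \<not> E v v) \<and> (\<forall>u v. E u v \<longrightarrow> u \<in> V \<and> v \<in> V)"

definition neighbours :: "'a set \<Rightarrow> ('a \<Rightarrow> 'a \<Rightarrow> bool) \<Rightarrow> 'a \<Rightarrow> 'a set" where
  "neighbours V E v = {u \<in> V. E v u}"

definition closed_nbhd :: "'a set \<Rightarrow> ('a \<Rightarrow> 'a \<Rightarrow> bool) \<Rightarrow> 'a \<Rightarrow> 'a set" where
  "closed_nbhd V E v = insert v (neighbours V E v)"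

definition degree :: "'a set \<Rightarrow> ('a \<Rightarrow> 'a \<Rightarrow> bool) \<Rightarrow> 'a \<Rightarrow> nat" where
  "degree V E v = card (neighbours V E v)"

definition min_degree :: "'a set \<Rightarrow> ('a \<Rightarrow> 'a \<Rightarrow> bool) \<Rightarrow> nat" where
  "min_degree V E = Min (degree V E ` V)"

definition signed_dom_fun :: "'a set \<Rightarrow> ('a \<Rightarrow> 'a \<Rightarrow> bool) \<Rightarrow> ('a \<Rightarrow> int) \<Rightarrow> bool" where
  "signed_dom_fun V E f \<longleftrightarrow> (\<forall>v\<in>V. f v \<in> {-1, 1}) \<and> (\<forall>v. v \<notin> V \<longrightarrow> f v = 0)
     \<and> (\<forall>v\<in>V. (\<Sum>x\<in>closed_nbhd V E v. f x) \<ge> 1)"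

definition signed_domination_number :: "'a set \<Rightarrow> ('a \<Rightarrow> 'a \<Rightarrow> bool) \<Rightarrow> int" where
  "signed_domination_number V E = Min {(\<Sum>v\<in>V. f v) | f. signed_dom_fun V E f}"

end

theory Submission
  imports Defs
begin

lemma wsum:
  fixes p :: real
  assumes "finite V"
  shows "\<And>S. S \<subseteq> V \<Longrightarrow> (\<Sum>A\<in>Pow V. if S \<subseteq> A then p ^ card A * (1-p) ^ card (V - A) else 0) = p ^ card S"
  using assms
proof (induction V rule: finite_induct)
  case empty
  then show ?case by simp
next
  case (insert x F S)
  have disj: "Pow F \<inter> insert x ` Pow F = {}" using insert.hyps(2) by auto
  have inj: "inj_on (insert x) (Pow F)" using insert.hyps(2)
    by (smt (verit, ccfv_SIG) PowD inj_onI insert_absorb insert_ident subset_iff)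
  have fin: "finite (Pow F)" "finite (insert x ` Pow F)" using insert.hyps(1) by auto
  define T where "T = (\<lambda>A. if S \<subseteq> A then p ^ card A * (1-p) ^ card (insert x F - A) else 0)"
  have "(\<Sum>A\<in>Pow (insert x F). T A) = (\<Sum>A\<in>Pow F. T A) + (\<Sum>A\<in>insert x ` Pow F. T A)"
    unfolding Pow_insert using disj fin by (simp add: sum.union_disjoint)
  also have "(\<Sum>A\<in>insert x ` Pow F. T A) = (\<Sum>B\<in>Pow F. T (insert x B))"
    using inj by (rule sum.reindex_cong) auto
  also have "(\<Sum>B\<in>Pow F. T (insert x B)) = p * (\<Sum>B\<in>Pow F. if S - {x} \<subseteq> B then p ^ card B * (1-p) ^ card (F - B) else 0)"
    unfolding sum_distrib_left
  proof (rule sum.cong[OF refl])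
    fix B assume B: "B \<in> Pow F"
    have fB: "finite B" using B insert.hyps(1) finite_subset by auto
    have xB: "x \<notin> B" using B insert.hyps(2) by auto
    have c1: "card (insert x B) = Suc (card B)" using fB xB by simp
    have c2: "insert x F - insert x B = F - B" using insert.hyps(2) by auto
    show "T (insert x B) = p * (if S - {x} \<subseteq> B then p ^ card B * (1-p) ^ card (F - B) else 0)"
      unfolding T_def c1 c2 by auto
  qed
  also have "\<dots> = p * p ^ card (S - {x})" using insert.IH[of "S - {x}"] insert.prems by auto
  also have "(\<Sum>A\<in>Pow F. T A) = (if x \<in> S then 0 else (1-p) * p ^ card S)"
  proof (cases "x \<in> S")
    case True
    have "T A = 0" if "A \<in> Pow F" for A using that True insert.hyps(2) unfolding T_def by auto
    then show ?thesis using True by simp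
  next
    case False
    have "(\<Sum>A\<in>Pow F. T A) = (1-p) * (\<Sum>A\<in>Pow F. if S \<subseteq> A then p ^ card A * (1-p) ^ card (F - A) else 0)"
      unfolding sum_distrib_left
    proof (rule sum.cong[OF refl])
      fix A assume A: "A \<in> Pow F"
      have fA: "finite (F - A)" using insert.hyps(1) by auto
      have "insert x F - A = insert x (F - A)" using A insert.hyps(2) by auto
      then have c: "card (insert x F - A) = Suc (card (F - A))" using fA insert.hyps(2) by simp
      show "T A = (1-p) * (if S \<subseteq> A then p ^ card A * (1-p) ^ card (F - A) else 0)"
        unfolding T_def c by auto
    qed
    also have "\<dots> = (1-p) * p ^ card S" using insert.IH[of S] insert.prems False by auto
    finally show ?thesis using False by simp
  qed
  finally show ?case
  proof -
    assume h: "(\<Sum>A\<in>Pow (insert x F). T A) = (if x \<in> S then 0 else (1 - p) * p ^ card S) + p * p ^ card (S - {x})"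
    have fS: "finite S" using insert.prems insert.hyps(1) finite_subset by auto
    show ?thesis
    proof (cases "x \<in> S")
      case True
      then have "card S = Suc (card (S - {x}))" using fS by (metis card_Suc_Diff1)
      then have "p ^ card S = p * p ^ card (S - {x})" by (simp only: power_Suc)
      then show ?thesis using h True unfolding T_def by simp
    next
      case False
      then show ?thesis using h unfolding T_def by (simp add: algebra_simps)
    qed
  qed
qed


lemma removal:
  fixes N :: "'v \<Rightarrow> 'a set" and m :: "'v \<Rightarrow> nat"
  assumes "finite V" "finite A"
  shows "\<exists>M\<subseteq>A. card A \<le> card M + (\<Sum>v\<in>V. card (N v \<inter> A) choose (m v + 1))
              \<and> (\<forall>v\<in>V. card (N v \<inter> M) \<le> m v)"
  using assms(2)
proof (induction A rule: finite_psubset_induct)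
  case (psubset A)
  show ?case
  proof (cases "\<forall>v\<in>V. card (N v \<inter> A) \<le> m v")
    case True
    then show ?thesis by auto
  next
    case False
    then obtain v where v: "v \<in> V" "card (N v \<inter> A) > m v" by auto
    then have "N v \<inter> A \<noteq> {}" by auto
    then obtain x where x: "x \<in> N v" "x \<in> A" by auto
    define A' where "A' = A - {x}"
    have sub: "A' \<subset> A" using x unfolding A'_def by auto
    obtain M where M: "M \<subseteq> A'" "card A' \<le> card M + (\<Sum>v\<in>V. card (N v \<inter> A') choose (m v + 1))"
      "\<forall>v\<in>V. card (N v \<inter> M) \<le> m v" using psubset.IH[OF sub] by blast
    have cA: "card A = Suc (card A')" using card_Suc_Diff1[OF psubset.hyps x(2)] unfolding A'_def
      by simp
    have le: "card (N u \<inter> A') choose (m u + 1) \<le> card (N u \<inter> A) choose (m u + 1)" for u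
    proof -
      have "card (N u \<inter> A') \<le> card (N u \<inter> A)"
        using psubset.hyps unfolding A'_def by (intro card_mono) auto
      then show ?thesis by (rule binomial_right_mono)
    qed
    have "N v \<inter> A = insert x (N v \<inter> A')" using x unfolding A'_def by auto
    moreover have "finite (N v \<inter> A')" using psubset.hyps unfolding A'_def by auto
    moreover have "x \<notin> N v \<inter> A'" unfolding A'_def by auto
    ultimately have cv: "card (N v \<inter> A) = Suc (card (N v \<inter> A'))" by simp
    have "m v \<le> card (N v \<inter> A')" using v(2) cv by simp
    then have "card (N v \<inter> A') choose (m v + 1) < card (N v \<inter> A) choose (m v + 1)"
      unfolding cv using zero_less_binomial by simp
    then have "(\<Sum>u\<in>V. card (N u \<inter> A') choose (m u + 1)) < (\<Sum>u\<in>V. card (N u \<inter> A) choose (m u + 1))"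
      using le v(1) assms(1) by (intro sum_strict_mono_ex1) auto
    then show ?thesis using M cA sub by (intro exI[of _ M]) auto
  qed
qed

lemma central_ratio: "(Suc k) * (2 * Suc k choose Suc k) = 2 * (2 * k + 1) * (2 * k choose k)"
proof -
  have a: "Suc k * (Suc (Suc (2*k)) choose Suc k) = Suc (Suc (2*k)) * (Suc (2*k) choose k)"
    by (rule Suc_times_binomial)
  have b: "Suc (2*k) * (2*k choose k) = (Suc (2*k) choose Suc k) * Suc k"
    by (rule Suc_times_binomial_eq)
  have c: "Suc (2*k) choose Suc k = Suc (2*k) choose k"
    using binomial_symmetric[of k "Suc (2*k)"] by simp
  have e: "2 * Suc k = Suc (Suc (2*k))" by simp
  have "(Suc k) * (2 * Suc k choose Suc k) = Suc (Suc (2*k)) * (Suc (2*k) choose k)" unfolding e by (rule a)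
  also have "\<dots> = 2 * ((Suc (2*k) choose Suc k) * Suc k)" unfolding c by (simp del: binomial_Suc_Suc)
  also have "\<dots> = 2 * (Suc (2*k) * (2*k choose k))" using b by (simp del: binomial_Suc_Suc)
  finally show ?thesis by (simp del: binomial_Suc_Suc)
qed

lemma central_le4: "(2 * Suc k choose Suc k) \<le> 4 * (2 * k choose k)"
proof -
  have "(Suc k) * (2 * Suc k choose Suc k) \<le> Suc k * (4 * (2 * k choose k))"
    unfolding central_ratio by simp
  then show ?thesis by (meson Suc_mult_le_cancel1)
qed

lemma central_lower: "k \<ge> 1 \<Longrightarrow> 4 ^ (k - 1) \<le> k * (2 * k choose k)"
proof (induction k rule: dec_induct)
  case base
  then show ?case by simp
next
  case (step k)
  have "4 ^ (Suc k - 1) = 4 * 4 ^ (k - 1)" using step.hyps by (cases k) auto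
  also have "\<dots> \<le> 4 * (k * (2 * k choose k))" using step.IH by simp
  also have "\<dots> \<le> 2 * (2 * k + 1) * (2 * k choose k)" by simp
  also have "\<dots> = Suc k * (2 * Suc k choose Suc k)" using central_ratio by simp
  finally show ?case .
qed

lemma central_decr:
  fixes p :: real
  assumes "0 \<le> p" "p \<le> 1/4" "k \<le> j"
  shows "real (2*j choose j) * p ^ j \<le> real (2*k choose k) * p ^ k"
  using assms(3)
proof (induction j rule: dec_induct)
  case base
  then show ?case by simp
next
  case (step j)
  have "real (2 * Suc j choose Suc j) * p ^ Suc j = (real (2 * Suc j choose Suc j) * p) * p ^ j" by simp
  also have "\<dots> \<le> real (2 * j choose j) * p ^ j"
  proof (rule mult_right_mono)
    have "real (2 * Suc j choose Suc j) \<le> 4 * real (2 * j choose j)"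
      using central_le4[of j] by (metis of_nat_le_iff of_nat_mult of_nat_numeral)
    then have "real (2 * Suc j choose Suc j) * p \<le> 4 * real (2 * j choose j) * p"
      using assms(1) by (intro mult_right_mono) auto
    also have "\<dots> = real (2 * j choose j) * (4 * p)" by simp
    also have "\<dots> \<le> real (2 * j choose j) * 1" using assms(2)
      by (intro mult_left_mono) auto
    finally show "real (2 * Suc j choose Suc j) * p \<le> real (2 * j choose j)" by simp
  qed (use assms in auto)
  also have "\<dots> \<le> real (2*k choose k) * p ^ k" by (rule step.IH)
  finally show ?case .
qed


lemma indic_card:
  assumes "finite A"
  shows "(\<Sum>x\<in>A. if x \<in> M then (1::real) else 0) = real (card (A \<inter> M))"
proof -
  have "(\<Sum>x\<in>A. if x \<in> M then (1::real) else 0) = sum (\<lambda>_. 1) {x\<in>A. x \<in> M}"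
    using sum.inter_filter[OF assms, of "\<lambda>_. (1::real)" "\<lambda>x. x \<in> M"] by simp
  also have "{x\<in>A. x \<in> M} = A \<inter> M" by auto
  finally show ?thesis by simp
qed

theorem theorem4:
  fixes V :: "'a set" and E :: "'a \<Rightarrow> 'a \<Rightarrow> bool"
  assumes "simple_graph V E" and "V \<noteq> {}" and "min_degree V E > 1"
  shows "let \<delta> = min_degree V E;
             \<delta>h = \<delta> div 2;
             \<delta>' = (if odd \<delta> then \<delta> else \<delta> + 1);
             d = real ((\<delta>' + 1) choose (nat \<lceil>real \<delta>' / 2\<rceil>))
         in real_of_int (signed_domination_number V E)
            \<le> (1 - 2 * real \<delta>h / ((1 + real \<delta>h) powr (1 + 1 / real \<delta>h) * d powr (1 / real \<delta>h)))
              * real (card V)"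
proof -
  note sg = assms(1)[unfolded simple_graph_def]
  have finV: "finite V" using sg by auto
  define \<delta> where "\<delta> = min_degree V E"
  define h where "h = \<delta> div 2"
  define k where "k = h + 1"
  define D where "D = real (2*k choose k)"
  define n where "n = card V"
  define Nc where "Nc = closed_nbhd V E"
  define m where "m = (\<lambda>v. degree V E v div 2)"
  have d2: "\<delta> \<ge> 2" using assms(3) \<delta>_def by simp
  have h1: "h \<ge> 1" using d2 h_def by simp
  have dp: "(if odd \<delta> then \<delta> else \<delta>+1) = 2*h+1" unfolding h_def by presburger
  have ce: "nat \<lceil>real (2*h+1) / 2\<rceil> = k"
  proof -
    have "\<lceil>real (2*h+1) / 2\<rceil> = int h + 1" by (intro ceiling_unique) auto
    then show ?thesis unfolding k_def by simp
  qed
  have dlet: "real (((if odd \<delta> then \<delta> else \<delta>+1) + 1) choose nat \<lceil>real (if odd \<delta> then \<delta> else \<delta> + 1) / 2\<rceil>) = D"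
    unfolding dp ce D_def k_def by (simp add: mult_2)
  have degV: "degree V E v \<ge> \<delta>" if "v \<in> V" for v
    unfolding \<delta>_def min_degree_def using that finV by (intro Min_le) auto
  have nbV: "neighbours V E v \<subseteq> V" for v unfolding neighbours_def by auto
  have NcV: "Nc v \<subseteq> V" if "v \<in> V" for v using that nbV unfolding Nc_def closed_nbhd_def by auto
  have finNc: "finite (Nc v)" for v using finV nbV finite_subset unfolding Nc_def closed_nbhd_def by blast
  have cardNc: "card (Nc v) = degree V E v + 1" for v
  proof -
    have "v \<notin> neighbours V E v" using sg unfolding neighbours_def by auto
    moreover have "finite (neighbours V E v)" using finV nbV finite_subset by blast
    ultimately show ?thesis unfolding Nc_def closed_nbhd_def degree_def by simp
  qed
  have Dpos: "D > 0" unfolding D_def by simp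
  define p where "p = (real k * D) powr (-1/real h)"
  have kD: "real k * D > 0" using Dpos k_def by simp
  have ppos: "p > 0" unfolding p_def using kD Dpos k_def by simp
  have ph: "p ^ h = 1 / (real k * D)"
  proof -
    have "p ^ h = p powr real h" using ppos by (simp add: powr_realpow)
    also have "\<dots> = (real k * D) powr (-1)" unfolding p_def powr_powr using h1 by simp
    also have "\<dots> = 1 / (real k * D)" using kD by (simp add: powr_neg_one)
    finally show ?thesis .
  qed
  have p4: "p \<le> 1/4"
  proof -
    have "4 ^ h \<le> k * (2*k choose k)" using central_lower[of k] k_def by simp
    then have "(4::real) ^ h \<le> real k * D" unfolding D_def
      by (metis of_nat_le_iff of_nat_mult of_nat_numeral of_nat_power)
    then have "p ^ h \<le> (1/4) ^ h" unfolding ph using kD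
      by (simp add: divide_simps power_divide)
    then have "p ^ Suc (h-1) \<le> (1/4) ^ Suc (h-1)" using h1 by simp
    then show ?thesis by (rule power_le_imp_le_base) simp
  qed
  have p1: "p \<le> 1" using p4 by simp
  define w where "w = (\<lambda>A. p ^ card A * (1-p) ^ card (V - A))"
  have wnn: "w A \<ge> 0" for A unfolding w_def using ppos p1 by simp
  have wS: "(\<Sum>A\<in>Pow V. if S \<subseteq> A then w A else 0) = p ^ card S" if "S \<subseteq> V" for S
    unfolding w_def using wsum[OF finV that] .
  have w1: "(\<Sum>A\<in>Pow V. w A) = 1" using wS[of "{}"] by simp
  define g where "g = (\<lambda>A. real (card A) - (\<Sum>v\<in>V. real (card (Nc v \<inter> A) choose (m v + 1))))"
  have E1: "(\<Sum>A\<in>Pow V. w A * real (card A)) = real n * p"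
  proof -
    have "(\<Sum>A\<in>Pow V. w A * real (card A)) = (\<Sum>A\<in>Pow V. \<Sum>x\<in>V. if {x} \<subseteq> A then w A else 0)"
    proof (rule sum.cong[OF refl])
      fix A assume A: "A \<in> Pow V"
      have "real (card A) = real (card (V \<inter> A))" using A by (simp add: Int_absorb1)
      also have "\<dots> = (\<Sum>x\<in>V. if x \<in> A then 1 else 0)" using indic_card[OF finV] by simp
      finally show "w A * real (card A) = (\<Sum>x\<in>V. if {x} \<subseteq> A then w A else 0)"
        by (auto simp add: sum_distrib_left intro!: sum.cong)
    qed
    also have "\<dots> = (\<Sum>x\<in>V. \<Sum>A\<in>Pow V. if {x} \<subseteq> A then w A else 0)" by (rule sum.swap)
    also have "\<dots> = (\<Sum>x\<in>V. p)" by (rule sum.cong[OF refl]) (subst wS, auto)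
    finally show ?thesis unfolding n_def by simp
  qed
  have E2: "(\<Sum>A\<in>Pow V. w A * real (card (Nc v \<inter> A) choose j)) = real (card (Nc v) choose j) * p ^ j"
    if v: "v \<in> V" for v j
  proof -
    define X where "X = {T. T \<subseteq> Nc v \<and> card T = j}"
    have finX: "finite X" unfolding X_def using finNc by simp
    have "(\<Sum>A\<in>Pow V. w A * real (card (Nc v \<inter> A) choose j)) = (\<Sum>A\<in>Pow V. \<Sum>T\<in>X. if T \<subseteq> A then w A else 0)"
    proof (rule sum.cong[OF refl])
      fix A assume A: "A \<in> Pow V"
      have "card (Nc v \<inter> A) choose j = card {T. T \<subseteq> Nc v \<inter> A \<and> card T = j}"
        using n_subsets[of "Nc v \<inter> A" j] finNc[of v] by simp
      also have "{T. T \<subseteq> Nc v \<inter> A \<and> card T = j} = X \<inter> {T. T \<subseteq> A}" unfolding X_def by auto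
      finally have "real (card (Nc v \<inter> A) choose j) = (\<Sum>T\<in>X. if T \<in> {T. T \<subseteq> A} then (1::real) else 0)"
        using indic_card[OF finX, of "{T. T \<subseteq> A}"] by simp
      then show "w A * real (card (Nc v \<inter> A) choose j) = (\<Sum>T\<in>X. if T \<subseteq> A then w A else 0)"
        by (auto simp add: sum_distrib_left intro!: sum.cong)
    qed
    also have "\<dots> = (\<Sum>T\<in>X. \<Sum>A\<in>Pow V. if T \<subseteq> A then w A else 0)" by (rule sum.swap)
    also have "\<dots> = (\<Sum>T\<in>X. p ^ j)"
    proof (rule sum.cong[OF refl])
      fix T assume "T \<in> X"
      then have "T \<subseteq> V" "card T = j" using NcV[OF v] unfolding X_def by auto
      then show "(\<Sum>A\<in>Pow V. if T \<subseteq> A then w A else 0) = p ^ j" using wS by simp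
    qed
    also have "\<dots> = real (card X) * p ^ j" by simp
    also have "card X = card (Nc v) choose j" unfolding X_def using finNc by (simp add: n_subsets)
    finally show ?thesis .
  qed
  have Eg: "(\<Sum>A\<in>Pow V. w A * g A) = real n * p - (\<Sum>v\<in>V. real (card (Nc v) choose (m v + 1)) * p ^ (m v + 1))"
  proof -
    have "(\<Sum>A\<in>Pow V. w A * g A) = (\<Sum>A\<in>Pow V. w A * real (card A)) - (\<Sum>A\<in>Pow V. \<Sum>v\<in>V. w A * real (card (Nc v \<inter> A) choose (m v + 1)))"
      unfolding g_def by (simp add: right_diff_distrib sum_subtractf sum_distrib_left)
    also have "(\<Sum>A\<in>Pow V. \<Sum>v\<in>V. w A * real (card (Nc v \<inter> A) choose (m v + 1))) = (\<Sum>v\<in>V. \<Sum>A\<in>Pow V. w A * real (card (Nc v \<inter> A) choose (m v + 1)))"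
      by (rule sum.swap)
    also have "\<dots> = (\<Sum>v\<in>V. real (card (Nc v) choose (m v + 1)) * p ^ (m v + 1))"
      by (rule sum.cong[OF refl]) (rule E2)
    finally show ?thesis using E1 by simp
  qed
  have pv: "real (card (Nc v) choose (m v + 1)) * p ^ (m v + 1) \<le> D * p ^ k" if v: "v \<in> V" for v
  proof -
    have dg: "degree V E v \<ge> 2*h" using degV[OF v] h_def by simp
    have "card (Nc v) \<le> 2 * (m v + 1)" unfolding cardNc m_def by simp
    then have "card (Nc v) choose (m v + 1) \<le> 2 * (m v + 1) choose (m v + 1)" by (rule binomial_right_mono)
    then have "real (card (Nc v) choose (m v + 1)) * p ^ (m v + 1) \<le> real (2 * (m v + 1) choose (m v + 1)) * p ^ (m v + 1)"
      using ppos by (intro mult_right_mono) auto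
    also have "\<dots> \<le> real (2*k choose k) * p ^ k"
      using central_decr[of p k "m v + 1"] ppos p4 dg unfolding k_def m_def by simp
    finally show ?thesis unfolding D_def .
  qed
  have Ebound: "(\<Sum>A\<in>Pow V. w A * g A) \<ge> real n * p * real h / real k"
  proof -
    have "(\<Sum>v\<in>V. real (card (Nc v) choose (m v + 1)) * p ^ (m v + 1)) \<le> (\<Sum>v\<in>V. D * p ^ k)"
      using pv by (rule sum_mono)
    also have "\<dots> = real n * (D * p ^ k)" unfolding n_def by simp
    also have "D * p ^ k = p * (D * p ^ h)" unfolding k_def by simp
    also have "D * p ^ h = 1 / real k" unfolding ph using Dpos by simp
    finally have "(\<Sum>v\<in>V. real (card (Nc v) choose (m v + 1)) * p ^ (m v + 1)) \<le> real n * (p * (1 / real k))" .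
    moreover have "real n * p * real h / real k = real n * p - real n * (p * (1 / real k))"
      unfolding k_def by (simp add: field_simps)
    ultimately show ?thesis unfolding Eg by linarith
  qed
  define gm where "gm = Max (g ` Pow V)"
  have finP: "finite (Pow V)" using finV by simp
  have "gm \<in> g ` Pow V" unfolding gm_def using finP by (intro Max_in) auto
  then obtain A0 where A0: "A0 \<in> Pow V" "g A0 = gm" by auto
  have "(\<Sum>A\<in>Pow V. w A * g A) \<le> (\<Sum>A\<in>Pow V. w A * gm)"
    using wnn finP unfolding gm_def by (intro sum_mono mult_left_mono) auto
  also have "\<dots> = gm" using w1 by (simp add: sum_distrib_right[symmetric])
  finally have gA0: "g A0 \<ge> real n * p * real h / real k" using Ebound A0 by simp
  have finA0: "finite A0" using A0 finV finite_subset by auto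
  obtain M where M: "M \<subseteq> A0" "card A0 \<le> card M + (\<Sum>v\<in>V. card (Nc v \<inter> A0) choose (m v + 1))"
     "\<forall>v\<in>V. card (Nc v \<inter> M) \<le> m v"
    using removal[OF finV finA0, of Nc m] by blast
  have cM: "real (card M) \<ge> real n * p * real h / real k"
  proof -
    have "real (card A0) \<le> real (card M) + (\<Sum>v\<in>V. real (card (Nc v \<inter> A0) choose (m v + 1)))"
      using M(2) by (metis of_nat_add of_nat_le_iff of_nat_sum)
    then show ?thesis using gA0 unfolding g_def by linarith
  qed
  have MV: "M \<subseteq> V" using M(1) A0(1) by auto
  define f where "f = (\<lambda>v. if v \<in> V then (if v \<in> M then -1 else 1) else 0::int)"
  have sumf: "real_of_int (\<Sum>x\<in>B. f x) = real (card B) - 2 * real (card (B \<inter> M))"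
    if "B \<subseteq> V" "finite B" for B
  proof -
    have "real_of_int (\<Sum>x\<in>B. f x) = (\<Sum>x\<in>B. 1 - 2 * (if x \<in> M then 1 else 0))"
      unfolding of_int_sum using that(1) by (intro sum.cong) (auto simp: f_def)
    also have "\<dots> = real (card B) - 2 * real (card (B \<inter> M))"
      by (simp add: sum_subtractf sum_distrib_left[symmetric] indic_card[OF that(2)])
    finally show ?thesis .
  qed
  have sdf: "signed_dom_fun V E f"
    unfolding signed_dom_fun_def
  proof (intro conjI ballI allI impI)
    fix v assume v: "v \<in> V"
    have "card (Nc v \<inter> M) \<le> m v" using M(3) v by auto
    then have "real (card (Nc v)) - 2 * real (card (Nc v \<inter> M)) \<ge> 1"
      unfolding cardNc m_def by linarith
    then have "real_of_int (\<Sum>x\<in>Nc v. f x) \<ge> 1" using sumf[OF NcV[OF v] finNc] by linarith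
    then show "1 \<le> (\<Sum>x\<in>closed_nbhd V E v. f x)" unfolding Nc_def by linarith
  qed (auto simp: f_def)
  have wf: "real_of_int (\<Sum>v\<in>V. f v) = real n - 2 * real (card M)"
    using sumf[OF order_refl finV] MV unfolding n_def by (simp add: Int_absorb1)
  have sdn: "signed_domination_number V E \<le> (\<Sum>v\<in>V. f v)"
  proof -
    let ?S = "{(\<Sum>v\<in>V. f v) | f. signed_dom_fun V E f}"
    have "?S \<subseteq> {- int n .. int n}"
    proof
      fix x assume "x \<in> ?S"
      then obtain f' where f': "x = (\<Sum>v\<in>V. f' v)" "signed_dom_fun V E f'" by auto
      have "\<bar>x\<bar> \<le> (\<Sum>v\<in>V. \<bar>f' v\<bar>)" unfolding f'(1) by (rule sum_abs)
      also have "\<dots> = (\<Sum>v\<in>V. 1)" using f'(2) unfolding signed_dom_fun_def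
        by (intro sum.cong) auto
      finally show "x \<in> {- int n .. int n}" unfolding n_def by auto
    qed
    then have "finite ?S" by (rule finite_subset) simp
    moreover have "(\<Sum>v\<in>V. f v) \<in> ?S" using sdf by auto
    ultimately show ?thesis unfolding signed_domination_number_def by (rule Min_le)
  qed
  have key: "2 * real h / ((1 + real h) powr (1 + 1 / real h) * D powr (1 / real h)) = 2 * (p * real h / real k)"
  proof -
    have rk: "1 + real h = real k" unfolding k_def by simp
    have "(1 + real h) powr (1 + 1 / real h) * D powr (1 / real h) = real k * (real k * D) powr (1 / real h)"
      unfolding rk using Dpos k_def by (simp add: powr_add powr_mult)
    moreover have "p = 1 / (real k * D) powr (1 / real h)" unfolding p_def
      by (simp add: powr_minus_divide[symmetric])
    ultimately show ?thesis by simp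
  qed
  have "real_of_int (signed_domination_number V E) \<le> real n - 2 * real (card M)"
    using sdn wf by linarith
  also have "\<dots> \<le> real n - 2 * (real n * p * real h / real k)" using cM by linarith
  also have "\<dots> = (1 - 2 * (p * real h / real k)) * real n" by (simp add: algebra_simps)
  finally show ?thesis unfolding Let_def dlet[unfolded \<delta>_def] h_def[unfolded \<delta>_def, symmetric]
    using key unfolding n_def \<delta>_def by simp
qed
end
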